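(* Let $0\le\lambda<1$ and $0<\alpha\le1$, and let $\varphi(z)=\left(\frac{1+z}{1-z}\right)^{\alpha}=1+2\alpha z+2\alpha^2z^2+\cdots$. If $f(z)=z+\sum_{n\ge2}a_nz^n$ belongs to $S_{\Sigma_1}^{\lambda}(\varphi)$, then $$|a_2|\le\frac{2\alpha}{1-\lambda}$$ and $$|a_3|\le\begin{cases}\dfrac{4\alpha^2}{(1-\lambda)^2}, & \alpha\ge\dfrac{1-\lambda}{4},\\[2ex]\dfrac{\alpha}{1-\lambda}, & \alpha<\dfrac{1-\lambda}{4}.\end{cases}$$
   Context: $U=\{z:|z|<1\}$. Subordination $F\prec G$: there is analytic $w:U\to U$, $w(0)=0$, with $F=G\circ w$. $\Sigma_1$ is the class of functions $f(z)=z+\sum_{n\ge2}a_nz^n$ univalent in $U$ whose inverse $g=f^{-1}$ extends to a univalent function on $U$. For $0\le\lambda<1$, $S_{\Sigma_1}^{\lambda}(\varphi)$ is the class of $f\in\Sigma_1$ with $\dfrac{zf'(z)}{(1-\lambda)f(z)+\lambda zf'(z)}\prec\varphi(z)$ and $\dfrac{wg'(w)}{(1-\lambda)g(w)+\lambda wg'(w)}\prec\varphi(w)$, where $g=f^{-1}$. The power $\left(\frac{1+z}{1-z}\right)^{\alpha}$ is the principal branch, equal to $1$ at $z=0$. *)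

theory Defs
  imports "HOL-Analysis.Analysis"
begin

definition unit_disc :: "complex set" where
  "unit_disc = ball 0 1"

definition subordinate :: "(complex \<Rightarrow> complex) \<Rightarrow> (complex \<Rightarrow> complex) \<Rightarrow> bool" where
  "subordinate F G \<longleftrightarrow>
     (\<exists>w. w holomorphic_on unit_disc \<and> w ` unit_disc \<subseteq> unit_disc \<and> w 0 = 0 \<and>
          (\<forall>z\<in>unit_disc. F z = G (w z)))"

definition taylor_coeff :: "(complex \<Rightarrow> complex) \<Rightarrow> nat \<Rightarrow> complex" where
  "taylor_coeff f n = (deriv ^^ n) f 0 / of_nat (fact n)"

definition normalized_univalent :: "(complex \<Rightarrow> complex) \<Rightarrow> bool" where
  "normalized_univalent f \<longleftrightarrow>
     f holomorphic_on unit_disc \<and> inj_on f unit_disc \<and> f 0 = 0 \<and> deriv f 0 = 1"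

definition inverse_extension :: "(complex \<Rightarrow> complex) \<Rightarrow> (complex \<Rightarrow> complex) \<Rightarrow> bool" where
  "inverse_extension f g \<longleftrightarrow>
     g holomorphic_on unit_disc \<and> inj_on g unit_disc \<and>
     (\<forall>z\<in>unit_disc. f z \<in> unit_disc \<longrightarrow> g (f z) = z)"

definition Sigma1 :: "(complex \<Rightarrow> complex) \<Rightarrow> bool" where
  "Sigma1 f \<longleftrightarrow> normalized_univalent f \<and> (\<exists>g. inverse_extension f g)"

text \<open>The quotient z h'(z) / ((1-lambda) h(z) + lambda z h'(z)), with its removable
  singularity at 0 filled in by its limit value 1.\<close>
definition lam_quot :: "real \<Rightarrow> (complex \<Rightarrow> complex) \<Rightarrow> complex \<Rightarrow> complex" where
  "lam_quot lam h z =
     (if z = 0 then 1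
      else z * deriv h z / ((1 - of_real lam) * h z + of_real lam * z * deriv h z))"

definition S_Sigma1 :: "real \<Rightarrow> (complex \<Rightarrow> complex) \<Rightarrow> (complex \<Rightarrow> complex) \<Rightarrow> bool" where
  "S_Sigma1 lam \<Phi> f \<longleftrightarrow>
     Sigma1 f \<and>
     (\<exists>g. inverse_extension f g \<and>
          subordinate (lam_quot lam f) \<Phi> \<and> subordinate (lam_quot lam g) \<Phi>)"

definition phi_alpha :: "real \<Rightarrow> complex \<Rightarrow> complex" where
  "phi_alpha \<alpha> z = ((1 + z) / (1 - z)) powr (of_real \<alpha>)"

end

theory Submission
  imports Defs "HOL-Complex_Analysis.Complex_Analysis"
begin


lemma base_ok:
  assumes "norm (z::complex) < 1"
  shows "(1+z)/(1-z) \<notin> \<real>\<^sub>\<le>\<^sub>0" and "1 - z \<noteq> 0" and "1 + z \<noteq> 0"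
proof -
  show nz: "1 - z \<noteq> 0" "1 + z \<noteq> 0" using assms
    by (metis norm_minus_cancel norm_one order_less_irrefl right_minus_eq add_eq_0_iff)+
  have "(Re z)^2 + (Im z)^2 < 1" using assms
    by (metis cmod_power2 norm_ge_zero power_less_one_iff zero_less_numeral one_less_numeral_iff semiring_norm(76) power2_less_imp_less abs_norm_cancel less_one power_strict_mono) 
  moreover have "Re z < 1" using assms abs_Re_le_cmod[of z] by linarith
  moreover have "0 \<le> (Im z)^2" by simp
  ultimately have "(1 - Re z)^2 + (Im z)^2 > 0" by (smt (verit) zero_less_power2)
  moreover have "Re ((1+z)/(1-z)) = (1 - ((Re z)^2 + (Im z)^2)) / ((1 - Re z)^2 + (Im z)^2)"
    by (simp add: Re_divide cmod_power2 power2_eq_square algebra_simps)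
  ultimately have "Re ((1+z)/(1-z)) > 0"
    using \<open>(Re z)^2 + (Im z)^2 < 1\<close> by simp
  then show "(1+z)/(1-z) \<notin> \<real>\<^sub>\<le>\<^sub>0"
    by (auto simp: complex_nonpos_Reals_iff)
qed

lemma U_open: "open unit_disc" and U0: "0 \<in> unit_disc"
  by (auto simp: unit_disc_def)

lemma dP:
  assumes "norm (z::complex) < 1"
  shows "((\<lambda>z. exp (of_real a * Ln ((1+z)/(1-z)))) has_field_derivative
           (2 * of_real a / (1 - z^2)) * exp (of_real a * Ln ((1+z)/(1-z)))) (at z)"
proof -
  note b = base_ok[OF assms]
  define q where "q = (1+z)/(1-z)"
  have d1: "((\<lambda>z. (1+z)/(1-z)) has_field_derivative 2/(1-z)^2) (at z)"
    using b(2) by (auto intro!: derivative_eq_intros simp: field_simps power2_eq_square)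
  have d2: "(Ln has_field_derivative inverse q) (at q)"
    using has_field_derivative_Ln[OF b(1)] by (simp add: q_def)
  have d3: "((\<lambda>z. Ln ((1+z)/(1-z))) has_field_derivative inverse q * (2/(1-z)^2)) (at z)"
    using DERIV_chain2[OF d2[unfolded q_def] d1] by (simp add: q_def)
  have d4: "((\<lambda>z. exp (of_real a * Ln ((1+z)/(1-z)))) has_field_derivative
      exp (of_real a * Ln ((1+z)/(1-z))) * (of_real a * (inverse q * (2/(1-z)^2)))) (at z)"
    by (rule DERIV_chain2[OF DERIV_exp, of "\<lambda>z. of_real a * Ln ((1+z)/(1-z))", OF DERIV_cmult[OF d3]])
  have e: "inverse q * (2/(1-z)^2) = 2 / (1 - z^2)"
  proof -
    have f: "(1 - z^2) = (1-z)*(1+z)" "(1-z)^2 = (1-z)*(1-z)" by (simp_all add: algebra_simps power2_eq_square)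
    show ?thesis unfolding f q_def using b(2,3) by (simp add: divide_simps)
  qed
  show ?thesis
    by (rule DERIV_cong[OF d4]) (simp only: e, simp add: mult_ac)
qed

lemma phi_props:
  fixes a :: real
  shows "phi_alpha a holomorphic_on unit_disc"
    and "\<And>z. z \<in> unit_disc \<Longrightarrow> phi_alpha a z \<noteq> 0"
    and "phi_alpha a 0 = 1"
    and "deriv (phi_alpha a) 0 = 2 * of_real a"
    and "(deriv ^^ 2) (phi_alpha a) 0 = 4 * (of_real a)^2"
proof -
  define P where "P = (\<lambda>z. exp (of_real a * Ln ((1+z)/(1-z))))"
  have eq: "phi_alpha a z = P z" if "z \<in> unit_disc" for z
  proof -
    have "norm z < 1" using that by (simp add: unit_disc_def)
    from base_ok[OF this] have "(1+z)/(1-z) \<noteq> 0" by auto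
    then show ?thesis by (simp add: phi_alpha_def P_def powr_def)
  qed
  have dPz: "(P has_field_derivative (2 * of_real a / (1 - z^2)) * P z) (at z)"
    if "z \<in> unit_disc" for z
    using dP[of z a] that by (simp add: P_def unit_disc_def)
  have holP: "P holomorphic_on unit_disc"
    using dPz holomorphic_on_def field_differentiable_def
    by (metis at_within_open U_open)
  show "phi_alpha a holomorphic_on unit_disc"
    by (rule holomorphic_transform[OF holP]) (simp add: eq)
  show "\<And>z. z \<in> unit_disc \<Longrightarrow> phi_alpha a z \<noteq> 0"
    by (simp add: eq P_def)
  show "phi_alpha a 0 = 1" by (simp add: phi_alpha_def)
  have ev: "eventually (\<lambda>z. phi_alpha a z = P z) (nhds 0)"
    using eventually_nhds_in_open[OF U_open U0] by (rule eventually_mono) (simp add: eq)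
  have ev2: "eventually (\<lambda>z. deriv P z = (2 * of_real a / (1 - z^2)) * P z) (nhds 0)"
    using eventually_nhds_in_open[OF U_open U0] by (rule eventually_mono) (metis DERIV_imp_deriv dPz)
  have P0: "P 0 = 1" by (simp add: P_def)
  have "deriv (phi_alpha a) 0 = deriv P 0"
    by (rule deriv_cong_ev[OF ev refl])
  also have "\<dots> = 2 * of_real a" using DERIV_imp_deriv[OF dPz[OF U0]] P0 by simp
  finally show "deriv (phi_alpha a) 0 = 2 * of_real a" .
  have "(deriv ^^ 2) (phi_alpha a) 0 = (deriv ^^ 2) P 0"
    by (rule higher_deriv_cong_ev[OF ev refl])
  also have "\<dots> = deriv (\<lambda>z. (2 * of_real a / (1 - z^2)) * P z) 0"
    by (simp add: numeral_2_eq_2 deriv_cong_ev[OF ev2 refl])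
  also have "\<dots> = 4 * (of_real a)^2"
  proof (rule DERIV_imp_deriv)
    show "((\<lambda>z. (2 * of_real a / (1 - z^2)) * P z) has_field_derivative 4 * (of_real a)^2) (at 0)"
      apply (rule derivative_eq_intros refl dPz[OF U0] | simp)+
      apply (simp add: P0 power2_eq_square)
      done
  qed
  finally show "(deriv ^^ 2) (phi_alpha a) 0 = 4 * (of_real a)^2" .
qed



lemma chain1:
  assumes h: "h holomorphic_on T" and k: "k holomorphic_on S" and "open S" "open T"
    and kS: "k ` S \<subseteq> T" and z: "z \<in> S"
  shows "deriv (\<lambda>x. h (k x)) z = deriv h (k z) * deriv k z"
proof (rule deriv_compose_analytic)
  show "h analytic_on {k z}" using h assms analytic_on_open analytic_on_subset by blast
  show "k analytic_on {z}" using k assms analytic_on_open analytic_on_subset by blast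
qed

lemma comp_holo:
  assumes h: "h holomorphic_on T" and k: "k holomorphic_on S" and kS: "k ` S \<subseteq> T"
  shows "(\<lambda>x. h (k x)) holomorphic_on S"
  using holomorphic_on_compose_gen[OF k h kS] by (simp add: o_def)

lemma chain2:
  assumes h: "h holomorphic_on T" and k: "k holomorphic_on S" and S: "open S" and T: "open T"
    and kS: "k ` S \<subseteq> T" and z: "z \<in> S"
  shows "(deriv ^^ 2) (\<lambda>x. h (k x)) z =
          (deriv ^^ 2) h (k z) * (deriv k z)^2 + deriv h (k z) * (deriv ^^ 2) k z"
proof -
  have dh: "deriv h holomorphic_on T" using h T by (rule holomorphic_deriv)
  have dk: "deriv k holomorphic_on S" using k S by (rule holomorphic_deriv)
  have c1: "deriv (\<lambda>x. h (k x)) = deriv (\<lambda>x. h (k x))" ..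
  have "(deriv ^^ 2) (\<lambda>x. h (k x)) z = deriv (deriv (\<lambda>x. h (k x))) z"
    by (simp add: numeral_2_eq_2)
  also have "\<dots> = deriv (\<lambda>x. deriv h (k x) * deriv k x) z"
  proof (rule complex_derivative_transform_within_open[OF _ _ S z])
    show "deriv (\<lambda>x. h (k x)) holomorphic_on S"
      by (rule holomorphic_deriv[OF comp_holo[OF h k kS] S])
    show "(\<lambda>x. deriv h (k x) * deriv k x) holomorphic_on S"
      by (intro holomorphic_intros comp_holo[OF dh k kS] dk)
    show "\<And>x. x \<in> S \<Longrightarrow> deriv (\<lambda>x. h (k x)) x = deriv h (k x) * deriv k x"
      using chain1[OF h k S T kS] .
  qed
  also have "\<dots> = deriv (\<lambda>x. deriv h (k x)) z * deriv k z + deriv h (k z) * deriv (deriv k) z"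
  proof -
    have a: "(\<lambda>x. deriv h (k x)) field_differentiable at z"
      using comp_holo[OF dh k kS] S z holomorphic_on_imp_differentiable_at by blast
    have b: "deriv k field_differentiable at z"
      using dk S z holomorphic_on_imp_differentiable_at by blast
    show ?thesis using deriv_mult[OF a b] by (simp add: algebra_simps)
  qed
  also have "\<dots> = (deriv ^^ 2) h (k z) * (deriv k z)^2 + deriv h (k z) * (deriv ^^ 2) k z"
    using chain1[OF dh k S T kS z] by (simp add: numeral_2_eq_2 power2_eq_square)
  finally show ?thesis .
qed

lemma chain3:
  assumes h: "h holomorphic_on T" and k: "k holomorphic_on S" and S: "open S" and T: "open T"
    and kS: "k ` S \<subseteq> T" and z: "z \<in> S"
  shows "(deriv ^^ 3) (\<lambda>x. h (k x)) z =
          (deriv ^^ 3) h (k z) * (deriv k z)^3 + 3 * (deriv ^^ 2) h (k z) * deriv k z * (deriv ^^ 2) k z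
           + deriv h (k z) * (deriv ^^ 3) k z"
proof -
  have dh: "deriv h holomorphic_on T" using h T by (rule holomorphic_deriv)
  have dk: "deriv k holomorphic_on S" using k S by (rule holomorphic_deriv)
  have "(deriv ^^ 3) (\<lambda>x. h (k x)) z = (deriv ^^ 2) (deriv (\<lambda>x. h (k x))) z"
    by (simp add: numeral_3_eq_3 numeral_2_eq_2 funpow_Suc_right del: funpow.simps)
  also have "\<dots> = (deriv ^^ 2) (\<lambda>x. deriv h (k x) * deriv k x) z"
  proof (rule higher_deriv_transform_within_open[OF _ _ S z])
    show "deriv (\<lambda>x. h (k x)) holomorphic_on S"
      by (rule holomorphic_deriv[OF comp_holo[OF h k kS] S])
    show "(\<lambda>x. deriv h (k x) * deriv k x) holomorphic_on S"
      by (intro holomorphic_intros comp_holo[OF dh k kS] dk)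
    show "\<And>x. x \<in> S \<Longrightarrow> deriv (\<lambda>x. h (k x)) x = deriv h (k x) * deriv k x"
      using chain1[OF h k S T kS] .
  qed
  also have "\<dots> = (\<Sum>i = 0..2. of_nat (2 choose i) * (deriv ^^ i) (\<lambda>x. deriv h (k x)) z * (deriv ^^ (2-i)) (deriv k) z)"
    by (rule higher_deriv_mult[OF comp_holo[OF dh k kS] dk S z])
  also have "\<dots> = deriv h (k z) * (deriv ^^ 2) (deriv k) z + 2 * deriv (\<lambda>x. deriv h (k x)) z * deriv (deriv k) z
       + (deriv ^^ 2) (\<lambda>x. deriv h (k x)) z * deriv k z"
    by (simp add: numeral_2_eq_2 algebra_simps)
  also have "\<dots> = (deriv ^^ 3) h (k z) * (deriv k z)^3 + 3 * (deriv ^^ 2) h (k z) * deriv k z * (deriv ^^ 2) k z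
           + deriv h (k z) * (deriv ^^ 3) k z"
    using chain1[OF dh k S T kS z] chain2[OF dh k S T kS z]
    by (simp add: numeral_3_eq_3 numeral_2_eq_2 funpow_Suc_right power2_eq_square power3_eq_cube algebra_simps del: funpow.simps)
  finally show ?thesis .
qed



lemma norm_ident:
  fixes a c :: complex
  shows "(norm (1 - cnj c * a))^2 - (norm (a - c))^2 = (1 - (norm a)^2) * (1 - (norm c)^2)"
  unfolding cmod_power2 by (simp add: power2_eq_square algebra_simps)

lemma pick:
  assumes h: "h holomorphic_on ball 0 1" and hle: "\<And>z. norm z < 1 \<Longrightarrow> norm (h z) \<le> 1"
  shows "norm (deriv h 0) \<le> 1 - (norm (h 0))^2"
proof -
  define c where "c = h 0"
  have dh: "(h has_field_derivative deriv h 0) (at 0)"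
    using h by (simp add: holomorphic_derivI)
  have c1: "norm c \<le> 1" using hle by (simp add: c_def)
  show ?thesis
  proof (cases "norm c = 1")
    case True
    have "h constant_on ball 0 1"
      by (rule maximum_modulus_principle[OF h _ _ _ order_refl, of 0])
         (use hle True in \<open>auto simp: c_def\<close>)
    then obtain k where "\<And>z. z \<in> ball 0 1 \<Longrightarrow> h z = k" by (auto simp: constant_on_def)
    then have "eventually (\<lambda>z. h z = k) (nhds 0)"
      using eventually_nhds_in_open[of "ball 0 1" 0] by (auto elim: eventually_mono)
    then have "deriv h 0 = deriv (\<lambda>_. k) 0" by (rule deriv_cong_ev) simp
    then show ?thesis using True by (simp add: c_def)
  next
    case False
    with c1 have c1': "norm c < 1" by simp
    have hlt: "norm (h z) < 1" if z: "norm z < 1" for z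
    proof (rule ccontr)
      assume "\<not> norm (h z) < 1"
      with hle z have hz: "norm (h z) = 1" by force
      have "h constant_on ball 0 1"
        by (rule maximum_modulus_principle[OF h _ _ _ order_refl, of z])
           (use hle hz z in \<open>auto\<close>)
      then have "h 0 = h z" using z by (auto simp: constant_on_def)
      with hz c1' show False by (simp add: c_def)
    qed
    have den: "1 - cnj c * h z \<noteq> 0" if "norm z < 1" for z
    proof
      assume "1 - cnj c * h z = 0"
      then have "norm (cnj c * h z) = 1" by (metis eq_iff_diff_eq_0 norm_one)
      moreover have "norm (cnj c * h z) < 1"
      proof -
        have "norm c * norm (h z) \<le> norm c"
          by (rule mult_left_le) (use hlt[OF that] in auto)
        then show ?thesis using c1' by (simp add: norm_mult)
      qed
      ultimately show False by simp
    qed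
    define k where "k z = (h z - c) / (1 - cnj c * h z)" for z
    have holk: "k holomorphic_on ball 0 1"
      unfolding k_def by (intro holomorphic_intros h) (use den in auto)
    have k0: "k 0 = 0" by (simp add: k_def c_def)
    have klt: "norm (k z) < 1" if z: "norm z < 1" for z
    proof -
      have "(1 - (norm (h z))^2) * (1 - (norm c)^2) > 0"
        using hlt[OF z] c1' by (simp add: power_less_one_iff abs_less_iff)
      then have "(norm (h z - c))^2 < (norm (1 - cnj c * h z))^2"
        using norm_ident[of c "h z"] by simp
      then have "norm (h z - c) < norm (1 - cnj c * h z)"
        using power2_less_imp_less by fastforce
      then show ?thesis using den[OF z] by (simp add: k_def norm_divide divide_less_eq)
    qed
    have nk: "norm (deriv k 0) \<le> 1"
      using Schwarz_Lemma(2)[OF holk k0 klt, of 0] by simp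
    have dk: "deriv k 0 = deriv h 0 / (1 - cnj c * c)"
    proof (rule DERIV_imp_deriv)
      have d0: "1 - cnj c * c \<noteq> 0" using den[of 0] by (simp add: c_def)
      show "(k has_field_derivative deriv h 0 / (1 - cnj c * c)) (at 0)"
        unfolding k_def
        apply (rule derivative_eq_intros refl dh | use d0 in \<open>simp add: c_def[symmetric]\<close>)+
        done
    qed
    have m: "1 - cnj c * c = of_real (1 - (norm c)^2)"
      by (subst of_real_diff, subst complex_norm_square) (simp add: mult.commute)
    have pos: "1 - (norm c)^2 > 0" using c1' by (simp add: power_less_one_iff abs_less_iff)
    have "norm (deriv k 0) = norm (deriv h 0) / (1 - (norm c)^2)"
      unfolding dk m norm_divide norm_of_real using pos by simp
    then have "norm (deriv h 0) / (1 - (norm c)^2) \<le> 1" using nk by simp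
    then show ?thesis using pos by (simp add: c_def divide_le_eq)
  qed
qed

lemma schwarz_coeff:
  assumes w: "w holomorphic_on ball 0 1" and w0: "w 0 = 0"
    and wlt: "\<And>z. norm z < 1 \<Longrightarrow> norm (w z) < 1"
  shows "norm (deriv w 0) \<le> 1"
    and "norm ((deriv ^^ 2) w 0) \<le> 2 * (1 - (norm (deriv w 0))^2)"
proof -
  show "norm (deriv w 0) \<le> 1" using Schwarz_Lemma(2)[OF w w0 wlt, of 0] by simp
  obtain h where h: "h holomorphic_on ball 0 1" and wz: "\<And>z. norm z < 1 \<Longrightarrow> w z = z * h z"
    and dw: "deriv w 0 = h 0"
    using Schwarz3[OF w w0] by blast
  have hle: "norm (h z) \<le> 1" if z: "norm z < 1" for z
  proof (cases "z = 0")
    case True then show ?thesis using Schwarz_Lemma(2)[OF w w0 wlt, of 0] dw by simp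
  next
    case False
    have "norm (w z) \<le> norm z" using Schwarz_Lemma(1)[OF w w0 wlt z] .
    then have "norm z * norm (h z) \<le> norm z * 1" using wz[OF z] by (simp add: norm_mult)
    then show ?thesis using False by (simp add: mult_le_cancel_left)
  qed
  have "(deriv ^^ 2) w 0 = (deriv ^^ 2) (\<lambda>z. z * h z) 0"
    by (rule higher_deriv_transform_within_open[OF w _ _ _ ]) (use h wz in \<open>auto intro: holomorphic_intros\<close>)
  also have "\<dots> = (\<Sum>i = 0..2. of_nat (2 choose i) * (deriv ^^ i) (\<lambda>z. z) 0 * (deriv ^^ (2-i)) h 0)"
    by (rule higher_deriv_mult) (use h in \<open>auto intro: holomorphic_intros\<close>)
  also have "\<dots> = 2 * deriv h 0"
    by (simp add: numeral_2_eq_2)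
  finally have "(deriv ^^ 2) w 0 = 2 * deriv h 0" .
  then show "norm ((deriv ^^ 2) w 0) \<le> 2 * (1 - (norm (deriv w 0))^2)"
    using pick[OF h hle] dw by (simp add: norm_mult)
qed



lemma deriv_funpow: "(deriv ^^ n) (deriv h) = (deriv ^^ Suc n) h"
  by (simp add: funpow_Suc_right del: funpow.simps)

lemma XD:
  assumes h: "h holomorphic_on S" and S: "open S" and z: "0 \<in> S"
  shows "(deriv ^^ k) (\<lambda>z. z * deriv h z) 0 = of_nat k * (deriv ^^ k) h 0"
proof -
  have "(deriv ^^ k) (\<lambda>z. z * deriv h z) 0 =
     (\<Sum>i = 0..k. of_nat (k choose i) * (deriv ^^ i) (\<lambda>z. z) 0 * (deriv ^^ (k-i)) (deriv h) 0)"
    by (rule higher_deriv_mult[OF _ holomorphic_deriv[OF h S] S z]) (auto intro: holomorphic_intros)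
  also have "\<dots> = (\<Sum>i \<in> {0..k}. if i = 1 then of_nat k * (deriv ^^ k) h 0 else 0)"
  proof (rule sum.cong[OF refl])
    fix i assume "i \<in> {0..k}"
    then show "of_nat (k choose i) * (deriv ^^ i) (\<lambda>z. z) 0 * (deriv ^^ (k-i)) (deriv h) 0 =
        (if i = 1 then of_nat k * (deriv ^^ k) h 0 else 0)"
      by (cases "i = 1") (auto simp: deriv_funpow Suc_diff_Suc)
  qed
  also have "\<dots> = of_nat k * (deriv ^^ k) h 0"
    by (cases k) (auto simp: sum.delta)
  finally show ?thesis .
qed

lemma quot_rel:
  fixes lam a :: real
  assumes h: "h holomorphic_on unit_disc" and h0: "h 0 = 0" and dh0: "deriv h 0 = 1"
    and sub: "subordinate (lam_quot lam h) (phi_alpha a)"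
  obtains w where "w holomorphic_on ball 0 1" "w 0 = 0" "\<And>z. norm z < 1 \<Longrightarrow> norm (w z) < 1"
    "(1 - of_real lam) * (deriv ^^ 2) h 0 = 4 * of_real a * deriv w 0"
    "2 * (1 - of_real lam) * (deriv ^^ 3) h 0 - 3 * (1 + of_real lam) * (2 * of_real a * deriv w 0) * (deriv ^^ 2) h 0
       = 3 * (4 * (of_real a)^2 * (deriv w 0)^2 + 2 * of_real a * (deriv ^^ 2) w 0)"
proof -
  define L where "L = (of_real lam :: complex)"
  note U = U_open U0
  from sub obtain w where w: "w holomorphic_on unit_disc" and wU: "w ` unit_disc \<subseteq> unit_disc"
    and w0: "w 0 = 0" and Qw: "\<And>z. z \<in> unit_disc \<Longrightarrow> lam_quot lam h z = phi_alpha a (w z)"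
    by (auto simp: subordinate_def)
  note ph = phi_props[where a=a]
  define D where "D z = (1 - L) * h z + L * (z * deriv h z)" for z
  have dh: "deriv h holomorphic_on unit_disc" by (rule holomorphic_deriv[OF h U_open])
  have holD: "D holomorphic_on unit_disc" unfolding D_def by (intro holomorphic_intros h dh)
  have holPw: "(\<lambda>z. phi_alpha a (w z)) holomorphic_on unit_disc" by (rule comp_holo[OF ph(1) w wU])
  have ident: "phi_alpha a (w z) * D z = z * deriv h z" if z: "z \<in> unit_disc" for z
  proof (cases "z = 0")
    case True then show ?thesis by (simp add: D_def h0)
  next
    case False
    have nz: "phi_alpha a (w z) \<noteq> 0" using ph(2) wU z by auto
    have q: "lam_quot lam h z = z * deriv h z / D z"
      using False by (simp add: lam_quot_def D_def L_def algebra_simps)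
    have "D z \<noteq> 0"
    proof
      assume "D z = 0" then have "lam_quot lam h z = 0" using q by simp
      with Qw[OF z] nz show False by simp
    qed
    then show ?thesis using Qw[OF z] q by (simp add: field_simps)
  qed
  have eqn: "(deriv ^^ n) (\<lambda>z. phi_alpha a (w z) * D z) 0 = (deriv ^^ n) (\<lambda>z. z * deriv h z) 0" for n
    by (rule higher_deriv_transform_within_open[OF _ _ U_open U0]) (auto intro!: holomorphic_intros holPw holD dh ident)
  have Dk: "(deriv ^^ k) D 0 = (1 - L) * (deriv ^^ k) h 0 + L * (of_nat k * (deriv ^^ k) h 0)" for k
  proof -
    have "(deriv ^^ k) D 0 = (deriv ^^ k) (\<lambda>z. (1 - L) * h z) 0 + (deriv ^^ k) (\<lambda>z. L * (z * deriv h z)) 0"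
      unfolding D_def by (rule higher_deriv_add[OF _ _ U_open U0]) (auto intro!: holomorphic_intros h dh)
    also have "\<dots> = (1 - L) * (deriv ^^ k) h 0 + L * (deriv ^^ k) (\<lambda>z. z * deriv h z) 0"
      by (subst higher_deriv_cmult[OF _ U0 U_open], rule h)+
         (subst higher_deriv_cmult[OF _ U0 U_open], auto intro!: holomorphic_intros dh)
    also have "\<dots> = (1 - L) * (deriv ^^ k) h 0 + L * (of_nat k * (deriv ^^ k) h 0)"
      using XD[OF h U_open U0] by simp
    finally show ?thesis .
  qed
  have D0: "D 0 = 0" by (simp add: D_def h0)
  have PW: "(deriv ^^ n) (\<lambda>z. phi_alpha a (w z) * D z) 0 =
      (\<Sum>i = 0..n. of_nat (n choose i) * (deriv ^^ i) (\<lambda>z. phi_alpha a (w z)) 0 * (deriv ^^ (n-i)) D 0)" for n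
    by (rule higher_deriv_mult[OF holPw holD U_open U0])
  have p0: "phi_alpha a (w 0) = 1" using ph(3) w0 by simp
  have p1: "deriv (\<lambda>z. phi_alpha a (w z)) 0 = 2 * of_real a * deriv w 0"
    using chain1[OF ph(1) w U_open U_open wU U0] ph(4) w0 by simp
  have p2: "(deriv ^^ 2) (\<lambda>z. phi_alpha a (w z)) 0 = 4 * (of_real a)^2 * (deriv w 0)^2 + 2 * of_real a * (deriv ^^ 2) w 0"
    using chain2[OF ph(1) w U_open U_open wU U0] ph(4,5) w0 by simp
  have e2: "(deriv ^^ 2) (\<lambda>z. phi_alpha a (w z) * D z) 0 = (1 - L) * (deriv ^^ 2) h 0 + L * (2 * (deriv ^^ 2) h 0)
             + 2 * (2 * of_real a * deriv w 0)"
    unfolding PW using p0 p1 D0 Dk[of 1] Dk[of 2] dh0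
    by (simp add: numeral_2_eq_2)
  have e3: "(deriv ^^ 3) (\<lambda>z. phi_alpha a (w z) * D z) 0 = (1 - L) * (deriv ^^ 3) h 0 + L * (3 * (deriv ^^ 3) h 0)
     + 3 * (2 * of_real a * deriv w 0) * ((1 - L) * (deriv ^^ 2) h 0 + L * (2 * (deriv ^^ 2) h 0))
     + 3 * (4 * (of_real a)^2 * (deriv w 0)^2 + 2 * of_real a * (deriv ^^ 2) w 0)"
    unfolding PW using p0 p1 p2 D0 Dk[of 1] Dk[of 2] Dk[of 3] dh0
    by (simp add: numeral_3_eq_3 numeral_2_eq_2)
  have r2: "(deriv ^^ 2) (\<lambda>z. z * deriv h z) 0 = 2 * (deriv ^^ 2) h 0"
    using XD[OF h U_open U0, of 2] by simp
  have r3: "(deriv ^^ 3) (\<lambda>z. z * deriv h z) 0 = 3 * (deriv ^^ 3) h 0"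
    using XD[OF h U_open U0, of 3] by simp
  have wlt: "norm (w z) < 1" if "norm z < 1" for z
  proof -
    have "z \<in> unit_disc" using that by (simp add: unit_disc_def)
    then have "w z \<in> unit_disc" using wU by blast
    then show ?thesis by (simp add: unit_disc_def)
  qed
  show ?thesis
  proof (rule that[of w])
    show "w holomorphic_on ball 0 1" using w by (simp add: unit_disc_def)
    show "w 0 = 0" by (rule w0)
    show "\<And>z. norm z < 1 \<Longrightarrow> norm (w z) < 1" by (rule wlt)
    show "(1 - of_real lam) * (deriv ^^ 2) h 0 = 4 * of_real a * deriv w 0"
      using eqn[of 2] e2 r2 unfolding L_def by (simp add: algebra_simps)
    show "2 * (1 - of_real lam) * (deriv ^^ 3) h 0 - 3 * (1 + of_real lam) * (2 * of_real a * deriv w 0) * (deriv ^^ 2) h 0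
       = 3 * (4 * (of_real a)^2 * (deriv w 0)^2 + 2 * of_real a * (deriv ^^ 2) w 0)"
      using eqn[of 3] e3 r3 unfolding L_def by (simp add: algebra_simps)
  qed
qed



lemma xt: "x * t + x * (1 - t) = (x::real)" by (simp add: algebra_simps)

lemma final_alg:
  fixes lam a :: real and F2 F3 u1 U2 v1 V2 :: complex
  assumes l0: "0 \<le> lam" and l1: "lam < 1" and a0: "0 < a"
    and nu1: "norm u1 \<le> 1" and nU2: "norm U2 \<le> 2 * (1 - (norm u1)^2)"
    and nV2: "norm V2 \<le> 2 * (1 - (norm v1)^2)"
    and e1: "(1 - of_real lam) * F2 = 4 * of_real a * u1"
    and e2: "2 * (1 - of_real lam) * F3 - 3 * (1 + of_real lam) * (2 * of_real a * u1) * F2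
       = 3 * (4 * (of_real a)^2 * u1^2 + 2 * of_real a * U2)"
    and e3: "(1 - of_real lam) * (- F2) = 4 * of_real a * v1"
    and e4: "2 * (1 - of_real lam) * (3 * F2^2 - F3) - 3 * (1 + of_real lam) * (2 * of_real a * v1) * (- F2)
       = 3 * (4 * (of_real a)^2 * v1^2 + 2 * of_real a * V2)"
  shows "norm (F2/2) \<le> 2 * a / (1 - lam) \<and>
         (if a \<ge> (1 - lam) / 4
          then norm (F3/6) \<le> 4 * a\<^sup>2 / (1 - lam)\<^sup>2
          else norm (F3/6) \<le> a / (1 - lam))"
proof -
  define c where "c = 1 - lam"
  have c0: "c > 0" using l1 by (simp add: c_def)
  have cc: "(1 - of_real lam :: complex) = of_real c" by (simp add: c_def)
  have cnz: "(of_real c :: complex) \<noteq> 0" using c0 by simp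
  have anz: "(of_real a :: complex) \<noteq> 0" using a0 by simp
  have hv: "v1 = - u1"
  proof -
    have "4 * of_real a * v1 = 4 * of_real a * (- u1)" using e1 e3 by (metis mult_minus_right)
    then show ?thesis using anz by (metis mult_cancel_left mult_eq_0_iff zero_neq_numeral)
  qed
  have hF2: "F2/2 = of_real (2 * a / c) * u1"
    using e1 cnz unfolding cc by (simp add: field_simps)
  have d: "2 * of_real c * (2 * F3 - 3 * F2^2) = 6 * of_real a * (U2 - V2)"
    using e2 e4 hv unfolding cc by algebra
  have hF3: "F3/6 = (F2/2)^2 + of_real (a / (4 * c)) * (U2 - V2)"
    using d cnz by (simp add: field_simps power2_eq_square)
  define t where "t = (norm u1)^2"
  have t0: "0 \<le> t" and t1: "t \<le> 1" using nu1 by (auto simp: t_def power_le_one)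
  have nv: "norm v1 = norm u1" using hv by simp
  have na2: "norm (F2/2) = 2 * a / c * norm u1"
  proof -
    have "norm (F2/2) = norm (of_real (2 * a / c) :: complex) * norm u1" by (simp only: hF2 norm_mult)
    moreover have "norm (of_real (2 * a / c) :: complex) = 2 * a / c"
      by (simp only: norm_of_real) (use a0 c0 in simp)
    ultimately show ?thesis by simp
  qed
  show ?thesis
  proof
    show "norm (F2/2) \<le> 2 * a / (1 - lam)"
    proof -
      have "2 * a / c * norm u1 \<le> 2 * a / c * 1"
        using nu1 a0 c0 by (intro mult_left_mono) auto
      then show ?thesis unfolding c_def[symmetric] using na2 by (metis mult.right_neutral)
    qed
  next
    have "norm (F3/6) \<le> norm ((F2/2)^2) + norm (of_real (a / (4 * c)) * (U2 - V2))"
      unfolding hF3 by (rule norm_triangle_ineq)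
    also have "norm ((F2/2)^2) = (4 * a^2 / c^2) * t"
      using na2 by (simp add: norm_power t_def power_mult_distrib power_divide)
    also have "norm (of_real (a / (4 * c)) * (U2 - V2)) = a / (4 * c) * norm (U2 - V2)"
      using a0 c0 by (simp only: norm_mult norm_of_real) simp
    also have "a / (4 * c) * norm (U2 - V2) \<le> a / (4 * c) * (4 * (1 - t))"
    proof (rule mult_left_mono)
      show "norm (U2 - V2) \<le> 4 * (1 - t)"
        using norm_triangle_ineq4[of U2 V2] nU2 nV2 nv by (simp add: t_def)
      show "0 \<le> a / (4 * c)" using a0 c0 by simp
    qed
    also have "a / (4 * c) * (4 * (1 - t)) = (a / c) * (1 - t)" using c0 by (simp add: field_simps)
    finally have main: "norm (F3/6) \<le> (4 * a^2 / c^2) * t + (a / c) * (1 - t)" by simp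
    have AB: "(4 * a^2 / c^2 \<ge> a / c) \<longleftrightarrow> a \<ge> c / 4"
      using a0 c0 by (simp add: field_simps power2_eq_square)
    show "if a \<ge> (1 - lam) / 4
          then norm (F3/6) \<le> 4 * a\<^sup>2 / (1 - lam)\<^sup>2
          else norm (F3/6) \<le> a / (1 - lam)"
    proof (cases "a \<ge> c / 4")
      case True
      then have "(a / c) * (1 - t) \<le> (4 * a^2 / c^2) * (1 - t)"
        using AB t1 by (intro mult_right_mono) auto
      moreover have "(4 * a^2 / c^2) * t + (4 * a^2 / c^2) * (1 - t) = 4 * a^2 / c^2"
        by (rule xt)
      ultimately have "norm (F3/6) \<le> 4 * a^2 / c^2" using main by linarith
      then show ?thesis using True by (simp add: c_def)
    next
      case False
      then have "(4 * a^2 / c^2) * t \<le> (a / c) * t"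
        using AB t0 by (intro mult_right_mono) auto
      moreover have "(a / c) * t + (a / c) * (1 - t) = a / c"
        by (rule xt)
      ultimately have "norm (F3/6) \<le> a / c" using main by linarith
      then show ?thesis using False by (simp add: c_def)
    qed
  qed
qed



lemma inv_rel:
  assumes f: "f holomorphic_on unit_disc" and f0: "f 0 = 0" and df: "deriv f 0 = 1"
    and ie: "inverse_extension f g"
  shows "g holomorphic_on unit_disc" "g 0 = 0" "deriv g 0 = 1"
    "(deriv ^^ 2) g 0 = - (deriv ^^ 2) f 0"
    "(deriv ^^ 3) g 0 = 3 * ((deriv ^^ 2) f 0)^2 - (deriv ^^ 3) f 0"
proof -
  have g: "g holomorphic_on unit_disc" and gf: "\<And>z. z \<in> unit_disc \<Longrightarrow> f z \<in> unit_disc \<Longrightarrow> g (f z) = z"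
    using ie by (auto simp: inverse_extension_def)
  show "g holomorphic_on unit_disc" by (rule g)
  define S where "S = unit_disc \<inter> f -` unit_disc"
  have S: "open S" unfolding S_def
    by (rule continuous_open_preimage[OF holomorphic_on_imp_continuous_on[OF f] U_open U_open])
  have S0: "0 \<in> S" using U0 f0 by (simp add: S_def)
  have fS: "f holomorphic_on S" using f by (rule holomorphic_on_subset) (auto simp: S_def)
  have fSU: "f ` S \<subseteq> unit_disc" by (auto simp: S_def)
  show g0: "g 0 = 0" using gf[of 0] U0 f0 by simp
  have hd: "(deriv ^^ n) (\<lambda>x. g (f x)) 0 = (deriv ^^ n) (\<lambda>x. x) 0" for n
    by (rule higher_deriv_transform_within_open[OF comp_holo[OF g fS fSU] _ S S0])
       (auto intro: holomorphic_intros gf simp: S_def)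
  have c1: "deriv g 0 * 1 = 1"
    using chain1[OF g fS S U_open fSU S0] hd[of 1] f0 df by simp
  then show "deriv g 0 = 1" by simp
  then have c2: "(deriv ^^ 2) g 0 + (deriv ^^ 2) f 0 = 0"
    using chain2[OF g fS S U_open fSU S0] hd[of 2] f0 df by simp
  then show g2: "(deriv ^^ 2) g 0 = - (deriv ^^ 2) f 0" by (simp add: eq_neg_iff_add_eq_0)
  have "(deriv ^^ 3) g 0 + 3 * (deriv ^^ 2) g 0 * (deriv ^^ 2) f 0 + (deriv ^^ 3) f 0 = 0"
    using chain3[OF g fS S U_open fSU S0] hd[of 3] f0 df \<open>deriv g 0 = 1\<close> by simp
  then show "(deriv ^^ 3) g 0 = 3 * ((deriv ^^ 2) f 0)^2 - (deriv ^^ 3) f 0"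
    unfolding g2 by (simp add: algebra_simps power2_eq_square eq_diff_eq add_eq_0_iff2)
qed



theorem corollary7:
  fixes lam \<alpha> :: real and f :: "complex \<Rightarrow> complex"
  assumes "0 \<le> lam" and "lam < 1" and "0 < \<alpha>" and "\<alpha> \<le> 1"
    and "S_Sigma1 lam (phi_alpha \<alpha>) f"
  shows "norm (taylor_coeff f 2) \<le> 2 * \<alpha> / (1 - lam) \<and>
         (if \<alpha> \<ge> (1 - lam) / 4
          then norm (taylor_coeff f 3) \<le> 4 * \<alpha>\<^sup>2 / (1 - lam)\<^sup>2
          else norm (taylor_coeff f 3) \<le> \<alpha> / (1 - lam))"
proof -
  from assms(5) obtain g where nf: "normalized_univalent f" and ie: "inverse_extension f g"
    and sf: "subordinate (lam_quot lam f) (phi_alpha \<alpha>)"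
    and sg: "subordinate (lam_quot lam g) (phi_alpha \<alpha>)"
    by (auto simp: S_Sigma1_def Sigma1_def)
  from nf have f: "f holomorphic_on unit_disc" and f0: "f 0 = 0" and df: "deriv f 0 = 1"
    by (auto simp: normalized_univalent_def)
  note gi = inv_rel[OF f f0 df ie]
  obtain w where w: "w holomorphic_on ball 0 1" "w 0 = 0" "\<And>z. norm z < 1 \<Longrightarrow> norm (w z) < 1"
    and ew1: "(1 - of_real lam) * (deriv ^^ 2) f 0 = 4 * of_real \<alpha> * deriv w 0"
    and ew2: "2 * (1 - of_real lam) * (deriv ^^ 3) f 0 - 3 * (1 + of_real lam) * (2 * of_real \<alpha> * deriv w 0) * (deriv ^^ 2) f 0
       = 3 * (4 * (of_real \<alpha>)^2 * (deriv w 0)^2 + 2 * of_real \<alpha> * (deriv ^^ 2) w 0)"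
    using quot_rel[OF f f0 df sf] by blast
  obtain v where v: "v holomorphic_on ball 0 1" "v 0 = 0" "\<And>z. norm z < 1 \<Longrightarrow> norm (v z) < 1"
    and ev1: "(1 - of_real lam) * (deriv ^^ 2) g 0 = 4 * of_real \<alpha> * deriv v 0"
    and ev2: "2 * (1 - of_real lam) * (deriv ^^ 3) g 0 - 3 * (1 + of_real lam) * (2 * of_real \<alpha> * deriv v 0) * (deriv ^^ 2) g 0
       = 3 * (4 * (of_real \<alpha>)^2 * (deriv v 0)^2 + 2 * of_real \<alpha> * (deriv ^^ 2) v 0)"
    using quot_rel[OF gi(1) gi(2) gi(3) sg] by blast
  have main: "norm ((deriv ^^ 2) f 0 / 2) \<le> 2 * \<alpha> / (1 - lam) \<and>
         (if \<alpha> \<ge> (1 - lam) / 4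
          then norm ((deriv ^^ 3) f 0 / 6) \<le> 4 * \<alpha>\<^sup>2 / (1 - lam)\<^sup>2
          else norm ((deriv ^^ 3) f 0 / 6) \<le> \<alpha> / (1 - lam))"
  proof (rule final_alg[OF assms(1,2,3)])
    show "norm (deriv w 0) \<le> 1" by (rule schwarz_coeff(1)[OF w])
    show "norm ((deriv ^^ 2) w 0) \<le> 2 * (1 - (norm (deriv w 0))^2)" by (rule schwarz_coeff(2)[OF w])
    show "norm ((deriv ^^ 2) v 0) \<le> 2 * (1 - (norm (deriv v 0))^2)" by (rule schwarz_coeff(2)[OF v])
    show "(1 - of_real lam) * (deriv ^^ 2) f 0 = 4 * of_real \<alpha> * deriv w 0" by (rule ew1)
    show "2 * (1 - of_real lam) * (deriv ^^ 3) f 0 - 3 * (1 + of_real lam) * (2 * of_real \<alpha> * deriv w 0) * (deriv ^^ 2) f 0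
       = 3 * (4 * (of_real \<alpha>)^2 * (deriv w 0)^2 + 2 * of_real \<alpha> * (deriv ^^ 2) w 0)" by (rule ew2)
    show "(1 - of_real lam) * - (deriv ^^ 2) f 0 = 4 * of_real \<alpha> * deriv v 0"
      using ev1 unfolding gi(4) .
    show "2 * (1 - of_real lam) * (3 * ((deriv ^^ 2) f 0)^2 - (deriv ^^ 3) f 0)
        - 3 * (1 + of_real lam) * (2 * of_real \<alpha> * deriv v 0) * - (deriv ^^ 2) f 0
       = 3 * (4 * (of_real \<alpha>)^2 * (deriv v 0)^2 + 2 * of_real \<alpha> * (deriv ^^ 2) v 0)"
      using ev2 unfolding gi(4) gi(5) .
  qed
  have tc: "taylor_coeff f 2 = (deriv ^^ 2) f 0 / 2" "taylor_coeff f 3 = (deriv ^^ 3) f 0 / 6"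
    by (simp_all add: taylor_coeff_def fact_numeral)
  show ?thesis unfolding tc by (rule main)
qed


end
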